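(* Let $\Gamma$ be a group generated by $d$ elements and let $N$ be a $\mathbb{Z}\Gamma$-module generated by $t$ elements as a $\mathbb{Z}\Gamma$-module. Suppose $N_0\le N$ is a $\mathbb{Z}\Gamma$-submodule of finite index $b=|N:N_0|$. Then $N_0$ can be generated by at most $t+(2d+1)\log_2 b$ elements as a $\mathbb{Z}\Gamma$-module. *)

theory Defs
  imports Complex_Main "HOL-Algebra.Generated_Groups"
begin

definition ZG_module :: "('g, 'b) monoid_scheme \<Rightarrow> ('g \<Rightarrow> 'm::ab_group_add \<Rightarrow> 'm) \<Rightarrow> bool" where
  "ZG_module G act \<longleftrightarrow>
     (\<forall>x. act \<one>\<^bsub>G\<^esub> x = x) \<and>
     (\<forall>g\<in>carrier G. \<forall>h\<in>carrier G. \<forall>x. act (g \<otimes>\<^bsub>G\<^esub> h) x = act g (act h x)) \<and>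
     (\<forall>g\<in>carrier G. \<forall>x y. act g (x + y) = act g x + act g y)"

definition ZG_submodule :: "('g, 'b) monoid_scheme \<Rightarrow> ('g \<Rightarrow> 'm::ab_group_add \<Rightarrow> 'm) \<Rightarrow> 'm set \<Rightarrow> bool" where
  "ZG_submodule G act M \<longleftrightarrow>
     0 \<in> M \<and> (\<forall>x\<in>M. \<forall>y\<in>M. x - y \<in> M) \<and> (\<forall>g\<in>carrier G. \<forall>x\<in>M. act g x \<in> M)"

definition ZG_span :: "('g, 'b) monoid_scheme \<Rightarrow> ('g \<Rightarrow> 'm::ab_group_add \<Rightarrow> 'm) \<Rightarrow> 'm set \<Rightarrow> 'm set" where
  "ZG_span G act X = \<Inter>{M. ZG_submodule G act M \<and> X \<subseteq> M}"

definition add_cosets :: "'m::ab_group_add set \<Rightarrow> 'm set set" where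
  "add_cosets N0 = {(\<lambda>y. x + y) ` N0 | x. True}"

end

theory Submission
  imports Defs
begin


definition asub :: "'m::ab_group_add set \<Rightarrow> bool" where
  "asub H \<longleftrightarrow> 0 \<in> H \<and> (\<forall>x\<in>H. \<forall>y\<in>H. x - y \<in> H)"

lemma asub_0: "asub H \<Longrightarrow> 0 \<in> H" by (simp add: asub_def)
lemma asub_diff: "asub H \<Longrightarrow> x \<in> H \<Longrightarrow> y \<in> H \<Longrightarrow> x - y \<in> H" by (simp add: asub_def)
lemma asub_uminus: "asub H \<Longrightarrow> x \<in> H \<Longrightarrow> - x \<in> H"
  using asub_diff[of H 0 x] asub_0[of H] by simp
lemma asub_add: "asub H \<Longrightarrow> x \<in> H \<Longrightarrow> y \<in> H \<Longrightarrow> x + y \<in> H"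
  using asub_diff[of H x "- y"] asub_uminus[of H y] by simp

inductive_set zsp :: "'m::ab_group_add set \<Rightarrow> 'm set" for A where
  zsp_0: "0 \<in> zsp A"
| zsp_base: "a \<in> A \<Longrightarrow> a \<in> zsp A"
| zsp_diff: "x \<in> zsp A \<Longrightarrow> y \<in> zsp A \<Longrightarrow> x - y \<in> zsp A"

lemma zsp_asub: "asub (zsp A)"
  by (simp add: asub_def zsp.intros)

lemma zsp_min: "asub H \<Longrightarrow> A \<subseteq> H \<Longrightarrow> zsp A \<subseteq> H"
proof
  fix x assume h: "asub H" "A \<subseteq> H" and xz: "x \<in> zsp A"
  from xz show "x \<in> H"
    by (induction rule: zsp.induct) (use h in \<open>auto simp: asub_def\<close>)
qed

lemma zsp_sup: "A \<subseteq> zsp A" by (auto intro: zsp_base)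

lemma zsp_mono: "A \<subseteq> B \<Longrightarrow> zsp A \<subseteq> zsp B"
  by (meson order_trans zsp_asub zsp_min zsp_sup)

fun nm :: "nat \<Rightarrow> 'm::ab_group_add \<Rightarrow> 'm" where
  "nm 0 z = 0"
| "nm (Suc k) z = z + nm k z"

lemma nm_add: "nm (a + b) z = nm a z + nm b z"
  by (induction a) (simp_all add: add.assoc)

lemma nm_asub: "asub H \<Longrightarrow> z \<in> H \<Longrightarrow> nm k z \<in> H"
  by (induction k) (simp_all add: asub_0 asub_add)

lemma asub_sum: "asub A \<Longrightarrow> asub B \<Longrightarrow> asub {a + b | a b. a \<in> A \<and> b \<in> B}"
  unfolding asub_def
proof (intro conjI ballI)
  assume A: "0 \<in> A \<and> (\<forall>x\<in>A. \<forall>y\<in>A. x - y \<in> A)" and B: "0 \<in> B \<and> (\<forall>x\<in>B. \<forall>y\<in>B. x - y \<in> B)"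
  show "0 \<in> {a + b |a b. a \<in> A \<and> b \<in> B}" using A B by force
  fix x y assume "x \<in> {a + b |a b. a \<in> A \<and> b \<in> B}" "y \<in> {a + b |a b. a \<in> A \<and> b \<in> B}"
  then obtain a1 b1 a2 b2 where "x = a1 + b1" "y = a2 + b2" "a1 \<in> A" "a2 \<in> A" "b1 \<in> B" "b2 \<in> B" by blast
  moreover have "a1 + b1 - (a2 + b2) = (a1 - a2) + (b1 - b2)" by simp
  ultimately show "x - y \<in> {a + b |a b. a \<in> A \<and> b \<in> B}" using A B by blast
qed

lemma zsp_decomp:
  assumes "asub H"
  shows "zsp (H \<union> B) \<subseteq> {h + u | h u. h \<in> H \<and> u \<in> zsp B}"
proof (rule zsp_min)
  show "asub {h + u | h u. h \<in> H \<and> u \<in> zsp B}" using asub_sum[OF assms zsp_asub] .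
  show "H \<union> B \<subseteq> {h + u | h u. h \<in> H \<and> u \<in> zsp B}"
  proof
    fix x assume "x \<in> H \<union> B"
    then show "x \<in> {h + u | h u. h \<in> H \<and> u \<in> zsp B}"
    proof
      assume "x \<in> H" then show ?thesis using zsp_0[of B] by (metis (mono_tags, lifting) add.right_neutral mem_Collect_eq)
    next
      assume "x \<in> B" then show ?thesis using asub_0[OF assms] zsp_base[of x B]
        by (metis (mono_tags, lifting) add_0 mem_Collect_eq)
    qed
  qed
qed

lemma zsp_ext:
  assumes H: "asub H" and n: "nm n z \<in> H" "0 < n"
  shows "zsp (H \<union> {z}) \<subseteq> {h + nm r z | h r. h \<in> H \<and> r < n}"
proof (rule zsp_min)
  let ?T = "{h + nm r z | h r. h \<in> H \<and> r < n}"
  show "asub ?T" unfolding asub_def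
  proof (intro conjI ballI)
    show "0 \<in> ?T" using asub_0[OF H] n by force
    fix x y assume "x \<in> ?T" "y \<in> ?T"
    then obtain h1 r1 h2 r2 where xy: "x = h1 + nm r1 z" "y = h2 + nm r2 z" "h1 \<in> H" "h2 \<in> H" "r1 < n" "r2 < n" by blast
    show "x - y \<in> ?T"
    proof (cases "r2 \<le> r1")
      case True
      then have "r1 = r2 + (r1 - r2)" by simp
      then have "nm r1 z = nm r2 z + nm (r1 - r2) z" by (metis nm_add)
      then have "x - y = (h1 - h2) + nm (r1 - r2) z" using xy by (simp add: algebra_simps)
      moreover have "h1 - h2 \<in> H" using asub_diff[OF H] xy by blast
      ultimately show ?thesis using xy by force
    next
      case False
      then have "n + r1 = r2 + (n + r1 - r2)" using xy by simp
      then have e: "nm n z + nm r1 z = nm r2 z + nm (n + r1 - r2) z" by (metis nm_add)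
      have "x - y = (h1 - h2 - nm n z) + nm (n + r1 - r2) z" using xy e by (simp add: algebra_simps)
      moreover have "h1 - h2 - nm n z \<in> H" using asub_diff[OF H] xy n by blast
      moreover have "n + r1 - r2 < n" using False xy by simp
      ultimately show ?thesis by force
    qed
  qed
  show "H \<union> {z} \<subseteq> ?T"
  proof
    fix x assume "x \<in> H \<union> {z}"
    then show "x \<in> ?T"
    proof
      assume "x \<in> H" then show ?thesis using n by force
    next
      assume x: "x \<in> {z}"
      show ?thesis
      proof (cases "n = 1")
        case True
        then have "z \<in> H" using n by simp
        then show ?thesis using x n by force
      next
        case False
        then have "1 < n" using n by simp
        then show ?thesis using x asub_0[OF H] by force
      qed
    qed
  qed
qed

lemma cos_eq:
  assumes N: "asub N"
  shows "((\<lambda>y. x + y) ` N = (\<lambda>y. w + y) ` N) \<longleftrightarrow> x - w \<in> N"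
proof
  assume "(\<lambda>y. x + y) ` N = (\<lambda>y. w + y) ` N"
  moreover have "x \<in> (\<lambda>y. x + y) ` N" using asub_0[OF N] by force
  ultimately obtain e where "e \<in> N" "x = w + e" by auto
  then show "x - w \<in> N" by simp
next
  assume d: "x - w \<in> N"
  show "(\<lambda>y. x + y) ` N = (\<lambda>y. w + y) ` N"
  proof (intro equalityI subsetI)
    fix p assume "p \<in> (\<lambda>y. x + y) ` N"
    then obtain e where e: "e \<in> N" "p = x + e" by auto
    have "(x - w) + e \<in> N" using asub_add[OF N d e(1)] .
    moreover have "p = w + ((x - w) + e)" using e by simp
    ultimately show "p \<in> (\<lambda>y. w + y) ` N" by blast
  next
    fix p assume "p \<in> (\<lambda>y. w + y) ` N"
    then obtain e where e: "e \<in> N" "p = w + e" by auto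
    have "e - (x - w) \<in> N" using asub_diff[OF N e(1) d] .
    moreover have "p = x + (e - (x - w))" using e by simp
    ultimately show "p \<in> (\<lambda>y. x + y) ` N" by blast
  qed
qed

lemma sub_asub: "ZG_submodule G act M \<Longrightarrow> asub M"
  by (simp add: ZG_submodule_def asub_def)

lemma span_sub: "ZG_submodule G act (ZG_span G act R)"
  unfolding ZG_span_def ZG_submodule_def by blast

lemma span_incl: "R \<subseteq> ZG_span G act R"
  unfolding ZG_span_def by blast

lemma span_min: "ZG_submodule G act M \<Longrightarrow> R \<subseteq> M \<Longrightarrow> ZG_span G act R \<subseteq> M"
  unfolding ZG_span_def by blast

lemma span_mono: "R \<subseteq> R' \<Longrightarrow> ZG_span G act R \<subseteq> ZG_span G act R'"
  by (meson span_incl span_min span_sub order_trans)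

lemma act_0: "ZG_module G act \<Longrightarrow> g \<in> carrier G \<Longrightarrow> act g 0 = 0"
  unfolding ZG_module_def by (metis add_cancel_right_right add_0)

lemma act_diff: "ZG_module G act \<Longrightarrow> g \<in> carrier G \<Longrightarrow> act g (x - y) = act g x - act g y"
  unfolding ZG_module_def by (metis add_diff_cancel diff_add_cancel)

lemma act_zsp: "ZG_module G act \<Longrightarrow> g \<in> carrier G \<Longrightarrow> act g ` zsp A \<subseteq> zsp (act g ` A)"
proof
  fix y assume m: "ZG_module G act" "g \<in> carrier G" "y \<in> act g ` zsp A"
  then obtain x where x: "x \<in> zsp A" "y = act g x" by auto
  from x(1) have "act g x \<in> zsp (act g ` A)"
    by (induction rule: zsp.induct) (auto simp: act_0[OF m(1,2)] act_diff[OF m(1,2)] intro: zsp.intros)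
  then show "y \<in> zsp (act g ` A)" using x by simp
qed



locale L3 =
  fixes G :: "('g, 'b) monoid_scheme" and act :: "'g \<Rightarrow> 'm::ab_group_add \<Rightarrow> 'm" and N0 :: "'m set"
  assumes grp: "group G" and md: "ZG_module G act" and sub: "ZG_submodule G act N0"
    and fin: "finite (add_cosets N0)"
begin

definition VV where "VV R = ZG_span G act R"
definition UU where "UU R Y = zsp (VV R \<union> Y)"
definition WW where "WW R Y = {u + e | u e. u \<in> UU R Y \<and> e \<in> N0}"
definition CC where "CC A = {c \<in> add_cosets N0. c \<subseteq> A}"
definition good where "good R Y \<longleftrightarrow> finite R \<and> R \<subseteq> N0 \<and> finite Y \<and> UU R Y \<inter> N0 \<subseteq> VV R
   \<and> 2 ^ card Y \<le> card (CC (WW R Y)) \<and> card R \<le> card Y"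

lemma N0a: "asub N0" using sub by (rule sub_asub)

lemma VV_sub: "ZG_submodule G act (VV R)" unfolding VV_def by (rule span_sub)
lemma VVa: "asub (VV R)" using VV_sub by (rule sub_asub)
lemma VV_N0: "R \<subseteq> N0 \<Longrightarrow> VV R \<subseteq> N0" unfolding VV_def using span_min[OF sub] .
lemma UUa: "asub (UU R Y)" unfolding UU_def by (rule zsp_asub)
lemma WWa: "asub (WW R Y)" unfolding WW_def using asub_sum[OF UUa N0a] .
lemma VV_UU: "VV R \<subseteq> UU R Y" unfolding UU_def using zsp_sup by blast
lemma Y_UU: "Y \<subseteq> UU R Y" unfolding UU_def using zsp_sup by blast
lemma UU_WW: "UU R Y \<subseteq> WW R Y" unfolding WW_def using asub_0[OF N0a] by force
lemma N0_WW: "N0 \<subseteq> WW R Y" unfolding WW_def using asub_0[OF UUa] by force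
lemma CC_sub: "CC A \<subseteq> add_cosets N0" unfolding CC_def by blast
lemma CC_fin: "finite (CC A)" using CC_sub fin finite_subset by blast
lemma N0_cos: "N0 \<in> add_cosets N0" unfolding add_cosets_def by (rule CollectI, rule exI[of _ 0]) simp
lemma CC_pos: "1 \<le> card (CC (WW R Y))"
proof -
  have "N0 \<in> CC (WW R Y)" unfolding CC_def using N0_cos N0_WW by blast
  then show ?thesis using CC_fin by (metis One_nat_def Suc_leI card_gt_0_iff empty_iff)
qed
lemma CC_le: "card (CC A) \<le> card (add_cosets N0)" using CC_sub fin card_mono by blast

lemma pigeon: "\<exists>n>0. nm n z \<in> N0"
proof -
  let ?b = "card (add_cosets N0)"
  let ?f = "\<lambda>k. (\<lambda>y. nm k z + y) ` N0"
  have img: "?f ` {0..?b} \<subseteq> add_cosets N0" unfolding add_cosets_def by blast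
  have "\<not> inj_on ?f {0..?b}"
  proof
    assume "inj_on ?f {0..?b}"
    then have "card {0..?b} \<le> ?b" using card_inj_on_le[OF _ img fin] by blast
    then show False by simp
  qed
  then obtain i j where ij: "i \<noteq> j" "?f i = ?f j" unfolding inj_on_def by blast
  have key: "\<And>i j. i < j \<Longrightarrow> ?f i = ?f j \<Longrightarrow> \<exists>n>0. nm n z \<in> N0"
  proof -
    fix i j :: nat assume a: "i < j" "?f i = ?f j"
    then have "nm i z - nm j z \<in> N0" using cos_eq[OF N0a] by blast
    moreover have "nm j z = nm i z + nm (j - i) z" using a(1) nm_add[of i "j - i" z] by simp
    ultimately have "- nm (j - i) z \<in> N0" by simp
    then have "nm (j - i) z \<in> N0" using asub_uminus[OF N0a] by fastforce
    then show "\<exists>n>0. nm n z \<in> N0" using a(1) by (intro exI[of _ "j - i"]) simp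
  qed
  show ?thesis using ij key[of i j] key[of j i] by (metis linorder_neq_iff)
qed

lemma inv_mono:
  assumes "R \<subseteq> R2" "R2 \<subseteq> N0" "UU R Y \<inter> N0 \<subseteq> VV R"
  shows "UU R2 Y \<inter> N0 \<subseteq> VV R2"
proof
  fix p assume p: "p \<in> UU R2 Y \<inter> N0"
  then obtain v u where vu: "v \<in> VV R2" "u \<in> zsp Y" "p = v + u"
    using zsp_decomp[OF VVa, of R2 Y] unfolding UU_def by blast
  have "u \<in> UU R Y" using vu(2) zsp_mono[of Y "VV R \<union> Y"] unfolding UU_def by blast
  moreover have "u = p - v" using vu by simp
  moreover have "p - v \<in> N0" using p vu(1) VV_N0[OF assms(2)] asub_diff[OF N0a] by blast
  ultimately have "u \<in> VV R" using assms(3) by blast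
  then have "u \<in> VV R2" unfolding VV_def using span_mono[OF assms(1)] by blast
  then show "p \<in> VV R2" using vu asub_add[OF VVa] by blast
qed

lemma step:
  assumes g: "good R Y" and z: "z \<notin> WW R Y"
  shows "\<exists>a. good (insert a R) (insert z Y) \<and> 2 * card (CC (WW R Y)) \<le> card (CC (WW (insert a R) (insert z Y)))"
proof -
  obtain n0 where n0: "n0 > 0" "nm n0 z \<in> N0" using pigeon by blast
  then have "nm n0 z \<in> WW R Y" using N0_WW by blast
  then have ex: "\<exists>n. 0 < n \<and> nm n z \<in> WW R Y" using n0 by blast
  define n where "n = (LEAST n. 0 < n \<and> nm n z \<in> WW R Y)"
  have n: "0 < n" "nm n z \<in> WW R Y" using LeastI_ex[OF ex] unfolding n_def by auto
  have nmin: "\<And>r. 0 < r \<Longrightarrow> r < n \<Longrightarrow> nm r z \<notin> WW R Y"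
    using not_less_Least unfolding n_def by blast
  obtain u0 a where ua: "u0 \<in> UU R Y" "a \<in> N0" "nm n z = u0 + a" using n(2) unfolding WW_def by blast
  let ?R = "insert a R" and ?Y = "insert z Y"
  have gR: "finite R" "R \<subseteq> N0" "finite Y" "UU R Y \<inter> N0 \<subseteq> VV R" "2 ^ card Y \<le> card (CC (WW R Y))" "card R \<le> card Y"
    using g unfolding good_def by auto
  have RN0: "?R \<subseteq> N0" using gR ua by blast
  have VV': "VV R \<subseteq> VV ?R" unfolding VV_def by (rule span_mono) blast
  have aV: "a \<in> VV ?R" unfolding VV_def using span_incl by blast
  have V'N0: "VV ?R \<subseteq> N0" using VV_N0[OF RN0] .
  define U1 where "U1 = zsp (VV ?R \<union> Y)"
  have U1a: "asub U1" unfolding U1_def by (rule zsp_asub)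
  have UU1: "UU R Y \<subseteq> U1" unfolding U1_def UU_def using VV' zsp_mono by (metis Un_mono order_refl)
  have VU1: "VV ?R \<subseteq> U1" unfolding U1_def using zsp_sup by blast
  have nU1: "nm n z \<in> U1" using ua UU1 VU1 aV asub_add[OF U1a] by auto
  have U'sub: "UU ?R ?Y \<subseteq> zsp (U1 \<union> {z})"
    unfolding UU_def
  proof (rule zsp_mono)
    show "VV ?R \<union> ?Y \<subseteq> U1 \<union> {z}" using VU1 zsp_sup[of "VV ?R \<union> Y"] unfolding U1_def by blast
  qed
  have inv': "UU ?R ?Y \<inter> N0 \<subseteq> VV ?R"
  proof
    fix p assume p: "p \<in> UU ?R ?Y \<inter> N0"
    then obtain h r where hr: "h \<in> U1" "r < n" "p = h + nm r z"
      using U'sub zsp_ext[OF U1a nU1 n(1)] by blast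
    from hr(1) obtain v u where vu: "v \<in> VV ?R" "u \<in> zsp Y" "h = v + u"
      using zsp_decomp[OF VVa, of ?R Y] unfolding U1_def by blast
    have uU: "u \<in> UU R Y" using vu(2) zsp_mono[of Y "VV R \<union> Y"] unfolding UU_def by blast
    have pv: "p - v \<in> N0" using p vu(1) V'N0 asub_diff[OF N0a] by blast
    have "r = 0"
    proof (rule ccontr)
      assume "r \<noteq> 0"
      have "nm r z = (- u) + (p - v)" using hr vu by (simp add: algebra_simps)
      moreover have "- u \<in> UU R Y" using uU asub_uminus[OF UUa] by blast
      ultimately have "nm r z \<in> WW R Y" using pv unfolding WW_def by blast
      then show False using nmin[of r] hr(2) \<open>r \<noteq> 0\<close> by blast
    qed
    then have "u = p - v" using hr vu by simp
    then have "u \<in> VV R" using gR(4) uU pv by blast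
    then have "u \<in> VV ?R" using VV' by blast
    then show "p \<in> VV ?R" using vu hr \<open>r = 0\<close> asub_add[OF VVa] by simp
  qed
  have UU'': "UU R Y \<subseteq> UU ?R ?Y" unfolding UU_def by (rule zsp_mono) (use VV' in blast)
  have zU: "z \<in> UU ?R ?Y" using Y_UU by blast
  define T where "T = (\<lambda>c. (\<lambda>y. z + y) ` c)"
  have Tinj: "inj T"
  proof (rule injI)
    fix c1 c2 assume "T c1 = T c2"
    moreover have "inj (\<lambda>y. z + y)" by (simp add: inj_def)
    ultimately show "c1 = c2" unfolding T_def using inj_image_eq_iff by metis
  qed
  have TC: "T ` CC (WW R Y) \<subseteq> CC (WW ?R ?Y)"
  proof
    fix c' assume "c' \<in> T ` CC (WW R Y)"
    then obtain c where c: "c \<in> CC (WW R Y)" "c' = T c" by blast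
    then obtain x where x: "c = (\<lambda>y. x + y) ` N0" unfolding CC_def add_cosets_def by blast
    have "c' = (\<lambda>y. (z + x) + y) ` N0" unfolding c(2) x T_def image_image by (simp add: add.assoc)
    then have "c' \<in> add_cosets N0" unfolding add_cosets_def by blast
    moreover have "c' \<subseteq> WW ?R ?Y"
    proof
      fix q assume "q \<in> c'"
      then obtain w where w: "w \<in> c" "q = z + w" unfolding c(2) T_def by blast
      then obtain u e where "u \<in> UU R Y" "e \<in> N0" "w = u + e" using c(1) unfolding CC_def WW_def by blast
      then have "z + u \<in> UU ?R ?Y" "q = (z + u) + e" using w zU UU'' asub_add[OF UUa] by (auto simp: add.assoc)
      then show "q \<in> WW ?R ?Y" unfolding WW_def using \<open>e \<in> N0\<close> by blast
    qed
    ultimately show "c' \<in> CC (WW ?R ?Y)" unfolding CC_def by blast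
  qed
  have WW'': "WW R Y \<subseteq> WW ?R ?Y" unfolding WW_def using UU'' by blast
  have CC'': "CC (WW R Y) \<subseteq> CC (WW ?R ?Y)" unfolding CC_def using WW'' by blast
  have disj: "CC (WW R Y) \<inter> T ` CC (WW R Y) = {}"
  proof (rule ccontr)
    assume "CC (WW R Y) \<inter> T ` CC (WW R Y) \<noteq> {}"
    then obtain c where c: "c \<in> CC (WW R Y)" "T c \<in> CC (WW R Y)" by blast
    then obtain x where x: "c = (\<lambda>y. x + y) ` N0" unfolding CC_def add_cosets_def by blast
    have xc: "x \<in> c" unfolding x using asub_0[OF N0a] by force
    then have "x \<in> WW R Y" "z + x \<in> WW R Y" using c unfolding CC_def T_def by blast+
    then have "(z + x) - x \<in> WW R Y" using asub_diff[OF WWa] by blast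
    then show False using z by simp
  qed
  have "card (CC (WW R Y) \<union> T ` CC (WW R Y)) = 2 * card (CC (WW R Y))"
    using card_Un_disjoint[OF CC_fin finite_imageI[OF CC_fin] disj] card_image[OF inj_on_subset[OF Tinj]] by simp
  moreover have "card (CC (WW R Y) \<union> T ` CC (WW R Y)) \<le> card (CC (WW ?R ?Y))"
    using CC'' TC CC_fin card_mono by (metis Un_least)
  ultimately have dbl: "2 * card (CC (WW R Y)) \<le> card (CC (WW ?R ?Y))" by simp
  have zY: "z \<notin> Y" using z Y_UU UU_WW by blast
  have cY: "card ?Y = Suc (card Y)" using zY gR(3) by simp
  have cR: "card ?R \<le> Suc (card R)" using gR(1) by (simp add: card_insert_if)
  have "good ?R ?Y" unfolding good_def
    using gR RN0 inv' dbl cY cR by auto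
  then show ?thesis using dbl by blast
qed

end


context L3
begin

lemma phase1_aux:
  "card (add_cosets N0) - card (CC (WW R Y)) = k \<Longrightarrow> good R Y \<Longrightarrow>
   \<exists>R' Y'. good R' Y' \<and> (\<forall>z \<in> Z0 \<union> (\<Union>s\<in>S. act s ` Y'). z \<in> WW R' Y')"
proof (induction k arbitrary: R Y rule: less_induct)
  case (less k)
  show ?case
  proof (cases "\<forall>z \<in> Z0 \<union> (\<Union>s\<in>S. act s ` Y). z \<in> WW R Y")
    case True then show ?thesis using less.prems by blast
  next
    case False
    then obtain z where z: "z \<notin> WW R Y" by blast
    obtain a where a: "good (insert a R) (insert z Y)"
      "2 * card (CC (WW R Y)) \<le> card (CC (WW (insert a R) (insert z Y)))"
      using step[OF less.prems(2) z] by blast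
    have "card (add_cosets N0) - card (CC (WW (insert a R) (insert z Y))) < k"
      using a(2) CC_pos[of R Y] CC_le[of "WW (insert a R) (insert z Y)"] less.prems(1) by linarith
    then show ?thesis using less.IH a(1) by blast
  qed
qed

lemma inv_clos:
  assumes Ua: "asub Uf" and Vs: "ZG_submodule G act Vf" and UN: "Uf \<inter> N0 \<subseteq> Vf" and VU: "Vf \<subseteq> Uf"
    and s: "s \<in> carrier G" and cl: "act s ` Uf \<subseteq> Uf"
  shows "act (inv\<^bsub>G\<^esub> s) ` Uf \<subseteq> Uf"
proof -
  have si: "inv\<^bsub>G\<^esub> s \<in> carrier G" using s grp by (simp add: group.inv_closed)
  have bk: "\<And>x. act (inv\<^bsub>G\<^esub> s) (act s x) = x"
    using md s si grp unfolding ZG_module_def by (metis group.l_inv)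
  let ?q = "\<lambda>u. (\<lambda>y. u + y) ` N0"
  let ?F = "?q ` Uf"
  have Ffin: "finite ?F" using fin by (rule finite_subset[rotated]) (auto simp: add_cosets_def)
  define h where "h = (\<lambda>c. ?q (act s (SOME u. u \<in> Uf \<and> ?q u = c)))"
  have hq: "\<And>u. u \<in> Uf \<Longrightarrow> h (?q u) = ?q (act s u)"
  proof -
    fix u assume u: "u \<in> Uf"
    define u' where "u' = (SOME u'. u' \<in> Uf \<and> ?q u' = ?q u)"
    have u': "u' \<in> Uf" "?q u' = ?q u" unfolding u'_def by (rule someI2[of _ u]; use u in auto)+
    then have "u' - u \<in> N0" using cos_eq[OF N0a] by blast
    then have "act s (u' - u) \<in> N0" using sub s unfolding ZG_submodule_def by blast
    then have "act s u' - act s u \<in> N0" using act_diff[OF md s] by simp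
    then show "h (?q u) = ?q (act s u)" unfolding h_def u'_def[symmetric] using cos_eq[OF N0a] by blast
  qed
  have hF: "h ` ?F \<subseteq> ?F" using hq cl by auto
  have hinj: "inj_on h ?F"
  proof (rule inj_onI)
    fix c1 c2 assume "c1 \<in> ?F" "c2 \<in> ?F" and e: "h c1 = h c2"
    then obtain u1 u2 where u: "u1 \<in> Uf" "u2 \<in> Uf" "c1 = ?q u1" "c2 = ?q u2" by blast
    then have "?q (act s u1) = ?q (act s u2)" using e hq by simp
    then have "act s u1 - act s u2 \<in> N0" using cos_eq[OF N0a] by blast
    then have "act s (u1 - u2) \<in> N0" using act_diff[OF md s] by simp
    then have "act (inv\<^bsub>G\<^esub> s) (act s (u1 - u2)) \<in> N0" using sub si unfolding ZG_submodule_def by blast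
    then have "u1 - u2 \<in> N0" using bk by simp
    then show "c1 = c2" using u cos_eq[OF N0a] by blast
  qed
  have hsurj: "h ` ?F = ?F" using endo_inj_surj[OF Ffin hF hinj] .
  show ?thesis
  proof
    fix x assume "x \<in> act (inv\<^bsub>G\<^esub> s) ` Uf"
    then obtain u where u: "u \<in> Uf" "x = act (inv\<^bsub>G\<^esub> s) u" by blast
    have "?q u \<in> h ` ?F" using hsurj u by blast
    then obtain u' where u': "u' \<in> Uf" "?q u = ?q (act s u')" using hq by auto
    then have d: "u - act s u' \<in> N0" using cos_eq[OF N0a] by blast
    moreover have "u - act s u' \<in> Uf" using u u' cl asub_diff[OF Ua] by blast
    ultimately have dV: "u - act s u' \<in> Vf" using UN by blast
    have "act (inv\<^bsub>G\<^esub> s) (u - act s u') \<in> Vf" using Vs si dV unfolding ZG_submodule_def by blast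
    moreover have "x = u' + act (inv\<^bsub>G\<^esub> s) (u - act s u')"
      using u act_diff[OF md si] bk by simp
    ultimately show "x \<in> Uf" using u' VU asub_add[OF Ua] by blast
  qed
qed

lemma final:
  assumes g: "good R Y" and S: "S \<subseteq> carrier G" "generate G S = carrier G" "finite S"
    and X: "finite X" "ZG_span G act X = UNIV"
    and cov: "\<forall>z \<in> X \<union> (\<Union>s\<in>S. act s ` Y). z \<in> WW R Y"
  shows "\<exists>Rf. finite Rf \<and> ZG_span G act Rf = N0 \<and> card Rf \<le> card R + card X + card S * card Y"
proof -
  have gR: "finite R" "R \<subseteq> N0" "finite Y" "UU R Y \<inter> N0 \<subseteq> VV R"
    using g unfolding good_def by auto
  define Z where "Z = X \<union> (\<Union>s\<in>S. act s ` Y)"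
  have Zfin: "finite Z" unfolding Z_def using X S gR by blast
  have "card (\<Union>s\<in>S. act s ` Y) \<le> (\<Sum>s\<in>S. card (act s ` Y))" using card_UN_le[OF S(3)] .
  also have "\<dots> \<le> (\<Sum>s\<in>S. card Y)" by (rule sum_mono) (rule card_image_le[OF gR(3)])
  finally have "card (\<Union>s\<in>S. act s ` Y) \<le> card S * card Y" by simp
  moreover have "card Z \<le> card X + card (\<Union>s\<in>S. act s ` Y)" unfolding Z_def by (rule card_Un_le)
  ultimately have cZ: "card Z \<le> card X + card S * card Y" by linarith
  have "\<forall>z\<in>Z. \<exists>a. a \<in> N0 \<and> z - a \<in> UU R Y"
  proof
    fix z assume "z \<in> Z"
    then obtain u e where "u \<in> UU R Y" "e \<in> N0" "z = u + e" using cov unfolding Z_def WW_def by blast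
    then show "\<exists>a. a \<in> N0 \<and> z - a \<in> UU R Y" by (intro exI[of _ e]) simp
  qed
  then obtain af where af: "\<And>z. z \<in> Z \<Longrightarrow> af z \<in> N0 \<and> z - af z \<in> UU R Y" by metis
  define Rf where "Rf = R \<union> af ` Z"
  have Rffin: "finite Rf" unfolding Rf_def using gR Zfin by blast
  have cRf: "card Rf \<le> card R + card Z" unfolding Rf_def
    using card_Un_le[of R "af ` Z"] card_image_le[OF Zfin, of af] by linarith
  have RfN0: "Rf \<subseteq> N0" unfolding Rf_def using gR af by blast
  have VfN0: "VV Rf \<subseteq> N0" using VV_N0[OF RfN0] .
  have invf: "UU Rf Y \<inter> N0 \<subseteq> VV Rf" using inv_mono[of R Rf, OF _ RfN0 gR(4)] unfolding Rf_def by blast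
  have UU': "UU R Y \<subseteq> UU Rf Y" unfolding UU_def VV_def
    by (rule zsp_mono) (use span_mono[of R Rf G act] in \<open>auto simp: Rf_def\<close>)
  define Uf where "Uf = UU Rf Y"
  have Ufa: "asub Uf" unfolding Uf_def by (rule UUa)
  have ZU: "Z \<subseteq> Uf"
  proof
    fix z assume z: "z \<in> Z"
    have "af z \<in> R \<union> af ` Z" using z by blast
    then have "af z \<in> VV Rf" unfolding VV_def Rf_def using span_incl[of "R \<union> af ` Z" G act] by blast
    then have "af z \<in> Uf" unfolding Uf_def using VV_UU by blast
    moreover have "z - af z \<in> Uf" using af[OF z] UU' unfolding Uf_def by blast
    ultimately have "(z - af z) + af z \<in> Uf" using asub_add[OF Ufa] by blast
    then show "z \<in> Uf" by simp
  qed
  have VU: "VV Rf \<subseteq> Uf" unfolding Uf_def by (rule VV_UU)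
  have closS: "\<And>s. s \<in> S \<Longrightarrow> act s ` Uf \<subseteq> Uf"
  proof -
    fix s assume s: "s \<in> S"
    then have sc: "s \<in> carrier G" using S by blast
    have "act s ` Uf \<subseteq> zsp (act s ` (VV Rf \<union> Y))" unfolding Uf_def UU_def by (rule act_zsp[OF md sc])
    also have "\<dots> \<subseteq> Uf"
    proof (rule zsp_min[OF Ufa])
      have "act s ` VV Rf \<subseteq> VV Rf" using VV_sub[of Rf] sc unfolding ZG_submodule_def by blast
      moreover have "act s ` Y \<subseteq> Z" unfolding Z_def using s by blast
      ultimately show "act s ` (VV Rf \<union> Y) \<subseteq> Uf" using VU ZU by blast
    qed
    finally show "act s ` Uf \<subseteq> Uf" .
  qed
  have closG: "\<And>g. g \<in> generate G S \<Longrightarrow> act g ` Uf \<subseteq> Uf"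
  proof -
    fix g assume "g \<in> generate G S"
    then show "act g ` Uf \<subseteq> Uf"
    proof (induction rule: generate.induct)
      case one
      then show ?case using md unfolding ZG_module_def by simp
    next
      case (incl h)
      then show ?case using closS by blast
    next
      case (inv h)
      show ?case using inv_clos[OF Ufa VV_sub invf[folded Uf_def] VU _ closS[OF inv]] inv S(1) by blast
    next
      case (eng h1 h2)
      have "h1 \<in> carrier G" "h2 \<in> carrier G" using eng.hyps S(2) by auto
      then have "act (h1 \<otimes>\<^bsub>G\<^esub> h2) = act h1 \<circ> act h2" using md unfolding ZG_module_def by auto
      then have "act (h1 \<otimes>\<^bsub>G\<^esub> h2) ` Uf = act h1 ` (act h2 ` Uf)" by (simp add: image_comp)
      also have "\<dots> \<subseteq> act h1 ` Uf" using eng.IH(2) by (rule image_mono)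
      also have "\<dots> \<subseteq> Uf" using eng.IH(1) .
      finally show ?case .
    qed
  qed
  have "ZG_submodule G act Uf"
    unfolding ZG_submodule_def using Ufa closG S(2) unfolding asub_def by blast
  moreover have "X \<subseteq> Uf" using ZU unfolding Z_def by blast
  ultimately have "ZG_span G act X \<subseteq> Uf" by (rule span_min)
  then have "N0 \<subseteq> VV Rf" using X(2) invf unfolding Uf_def by blast
  then have "ZG_span G act Rf = N0" using VfN0 unfolding VV_def by blast
  then show ?thesis using Rffin cRf cZ by (intro exI[of _ Rf]) simp
qed

end

theorem lemma3:
  fixes G :: "('g, 'b) monoid_scheme"
    and act :: "'g \<Rightarrow> 'm::ab_group_add \<Rightarrow> 'm"
    and N0 :: "'m set" and d t b :: nat
  assumes "group G"
    and "\<exists>S. finite S \<and> card S \<le> d \<and> S \<subseteq> carrier G \<and> generate G S = carrier G"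
    and "ZG_module G act"
    and "\<exists>X. finite X \<and> card X \<le> t \<and> ZG_span G act X = UNIV"
    and "ZG_submodule G act N0"
    and "finite (add_cosets N0)" and "b = card (add_cosets N0)"
  shows "\<exists>Y. finite Y \<and> ZG_span G act Y = N0 \<and>
           real (card Y) \<le> real t + (2 * real d + 1) * log 2 (real b)"
proof -
  interpret L: L3 G act N0 by (rule L3.intro) (rule assms)+
  obtain S where S: "finite S" "card S \<le> d" "S \<subseteq> carrier G" "generate G S = carrier G" using assms(2) by blast
  obtain X where X: "finite X" "card X \<le> t" "ZG_span G act X = UNIV" using assms(4) by blast
  have g0: "L.good {} {}"
  proof -
    have "L.UU {} {} \<subseteq> L.VV {}" unfolding L.UU_def by (rule zsp_min[OF L.VVa]) simp
    then show ?thesis unfolding L.good_def using L.CC_pos[of "{}" "{}"] by auto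
  qed
  obtain R Y where RY: "L.good R Y" "\<forall>z \<in> X \<union> (\<Union>s\<in>S. act s ` Y). z \<in> L.WW R Y"
    using L.phase1_aux[OF refl g0, of X S] by blast
  obtain Rf where Rf: "finite Rf" "ZG_span G act Rf = N0" "card Rf \<le> card R + card X + card S * card Y"
    using L.final[OF RY(1) S(3,4,1) X(1,3) RY(2)] by blast
  let ?m = "card Y"
  have m: "2 ^ ?m \<le> b" "card R \<le> ?m" using RY(1) L.CC_le[of "L.WW R Y"] assms(7) unfolding L.good_def by auto
  have "0 < b" using m(1) by (rule order_less_le_trans[rotated]) simp
  then have bpos: "(0::real) < real b" by simp
  have lm: "real ?m \<le> log 2 (real b)"
  proof -
    have "(2::real) powr real ?m = 2 ^ ?m" by (simp add: powr_realpow)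
    also have "\<dots> = real (2 ^ ?m)" by simp
    also have "\<dots> \<le> real b" using m(1) by (simp only: of_nat_le_iff)
    finally show ?thesis using le_log_iff[of 2 "real b" "real ?m"] bpos by simp
  qed
  have "card Rf \<le> ?m + t + d * ?m"
  proof -
    have "card S * card Y \<le> d * ?m" using S(2) by (rule mult_right_mono) simp
    then show ?thesis using Rf(3) m(2) X(2) by linarith
  qed
  then have "real (card Rf) \<le> real (?m + t + d * ?m)" by (simp only: of_nat_le_iff)
  also have "\<dots> = real ?m + real t + real d * real ?m" by simp
  also have "\<dots> \<le> real t + (2 * real d + 1) * log 2 (real b)"
  proof -
    have "real d * real ?m \<le> real d * log 2 (real b)" using lm by (simp add: mult_left_mono)
    moreover have "0 \<le> real d * log 2 (real b)" using lm by simp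
    moreover have "(2 * real d + 1) * log 2 (real b) = 2 * (real d * log 2 (real b)) + log 2 (real b)"
      by (simp add: algebra_simps)
    ultimately show ?thesis using lm by linarith
  qed
  finally show ?thesis using Rf by blast
qed


end
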